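(* Let $\mu^+_1,\mu^-_1,\mu^+_2,\mu^-_2\in\Lambda$ satisfy $\alpha^\vee_i(\mu^+_1)=\alpha^\vee_i(\mu^+_2)$ and $\alpha^\vee_i(\mu^-_1)=\alpha^\vee_i(\mu^-_2)$ for all $1\le i\le n-1$. Then the assignment $$E_{i,r}\mapsto E_{i,r},\quad F_{i,r}\mapsto F_{i,r},\quad \varphi^\pm_{i,\pm s}\mapsto\varphi^\pm_{i,\pm s\mp\epsilon^\vee_i(\mu^\pm_1-\mu^\pm_2)}$$ gives rise to a $\mathbb{C}(v)$-algebra isomorphism $U_{\mu^+_1,\mu^-_1}(L\mathfrak{gl}_n)\xrightarrow{\sim}U_{\mu^+_2,\mu^-_2}(L\mathfrak{gl}_n)$.
   Context: Let $n\ge2$, $\Lambda=\bigoplus_{j=1}^n\mathbb{Z}\epsilon_j$, $\epsilon^\vee_j$ dual basis, $\alpha^\vee_i=\epsilon^\vee_i-\epsilon^\vee_{i+1}$. For $\nu^+,\nu^-\in\Lambda$ put $d^\pm_j:=\epsilon^\vee_j(\nu^\pm)$. $U_{\nu^+,\nu^-}(L\mathfrak{gl}_n)$ is the associative $\mathbb{C}(v)$-algebra generated by $E_{i,r},F_{i,r}$ ($1\le i<n$, $r\in\mathbb{Z}$), $\varphi^\pm_{i,\pm s}$ ($1\le i\le n$, $s\ge d^\pm_i$) and $(\varphi^\pm_{i,\pm d^\pm_i})^{-1}$, with generating series $E_i(z)=\sum_{r\in\mathbb{Z}}E_{i,r}z^{-r}$, $F_i(z)=\sum_rF_{i,r}z^{-r}$,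 $\varphi^\pm_i(z)=\sum_{r\ge d^\pm_i}\varphi^\pm_{i,\pm r}z^{\mp r}$, $\delta(z)=\sum_{r\in\mathbb{Z}}z^r$, and defining relations (for all $i,j$, $\epsilon,\epsilon'\in\{\pm\}$; relations involving rational functions are understood after multiplying by denominators; $[a,b]_x:=ab-xba$): (U0) $[\varphi^\epsilon_i(z),\varphi^{\epsilon'}_j(w)]=0$, $\varphi^\pm_{i,\pm d^\pm_i}(\varphi^\pm_{i,\pm d^\pm_i})^{-1}=(\varphi^\pm_{i,\pm d^\pm_i})^{-1}\varphi^\pm_{i,\pm d^\pm_i}=1$; (U1) $[E_i(z),F_j(w)]=(v-v^{-1})\delta_{ij}\delta(z/w)\big(\varphi^+_i(z)^{-1}\varphi^+_{i+1}(z)-\varphi^-_i(z)^{-1}\varphi^-_{i+1}(z)\big)$; (U2) $\varphi^\epsilon_i(z)E_j(w)=\big(\frac{z-w}{v^{-1}z-vw}\big)^{\delta_{i,j+1}}\big(\frac{z-w}{vz-v^{-1}w}\big)^{\delta_{i,j}}E_j(w)\varphi^\epsilon_i(z)$; (U3) $\varphi^\epsilon_i(z)F_j(w)=\big(\frac{v^{-1}z-vw}{z-w}\big)^{\delta_{i,j+1}}\big(\frac{vz-v^{-1}w}{z-w}\big)^{\delta_{i,j}}F_j(w)\varphi^\epsilon_i(z)$; (U4) $E_i(z)E_j(w)=\big(\frac{vz-v^{-1}w}{v^{-1}z-vw}\big)^{\delta_{ij}}\big(\frac{z-w}{vz-v^{-1}w}\big)^{\delta_{i,j-1}}\big(\frac{v^{-1}z-vw}{z-w}\big)^{\delta_{i,j+1}}E_j(w)E_i(z)$;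 (U5) $F_i(z)F_j(w)=\big(\frac{v^{-1}z-vw}{vz-v^{-1}w}\big)^{\delta_{ij}}\big(\frac{vz-v^{-1}w}{z-w}\big)^{\delta_{i,j-1}}\big(\frac{z-w}{v^{-1}z-vw}\big)^{\delta_{i,j+1}}F_j(w)F_i(z)$; (U6),(U7) for $|i-j|=1$: $[E_i(z_1),[E_i(z_2),E_j(w)]_v]_{v^{-1}}+[E_i(z_2),[E_i(z_1),E_j(w)]_v]_{v^{-1}}=0$, and the same with $F$ in place of $E$. *)

theory Defs
  imports "HOL-Library.Poly_Mapping" "HOL-Computational_Algebra.Polynomial"
          "HOL-Computational_Algebra.Fraction_Field"
begin

type_synonym K = "complex poly fract"

definition qv :: K where "qv = Fract [:0, 1:] 1"

(* Generators:
   GE i r = E_{i,r};  GF i r = F_{i,r};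
   GPhi True i s  = phi^+_{i,s}   (coefficient of z^{-s} in phi^+_i(z));
   GPhi False i s = phi^-_{i,-s}  (coefficient of z^{s}  in phi^-_i(z));
   GPhiInv b i = (phi^{+/-}_{i,+/-d^{+/-}_i})^{-1}. *)
datatype gen = GE nat int | GF nat int | GPhi bool nat int | GPhiInv bool nat

(* free associative C(v)-algebra on gen: finitely supported functions on words *)
type_synonym FA = "gen list \<Rightarrow>\<^sub>0 K"

definition fmul :: "FA \<Rightarrow> FA \<Rightarrow> FA" (infixl "\<odot>" 70) where
  "p \<odot> q = (\<Sum>a\<in>Poly_Mapping.keys p. \<Sum>b\<in>Poly_Mapping.keys q. Poly_Mapping.single (a @ b) (Poly_Mapping.lookup p a * Poly_Mapping.lookup q b))"

definition fone :: FA where "fone = Poly_Mapping.single [] 1"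

definition sc :: "K \<Rightarrow> FA" where "sc c = Poly_Mapping.single [] c"

definition gen :: "gen \<Rightarrow> FA" where "gen g = Poly_Mapping.single [g] 1"

inductive_set ideal_of :: "FA set \<Rightarrow> FA set" for R where
  zero: "0 \<in> ideal_of R"
| gen_rel: "r \<in> R \<Longrightarrow> a \<odot> r \<odot> b \<in> ideal_of R"
| add: "x \<in> ideal_of R \<Longrightarrow> y \<in> ideal_of R \<Longrightarrow> x + y \<in> ideal_of R"

fun word_eval :: "(gen \<Rightarrow> FA) \<Rightarrow> gen list \<Rightarrow> FA" where
  "word_eval \<sigma> [] = fone"
| "word_eval \<sigma> (g # w) = \<sigma> g \<odot> word_eval \<sigma> w"

definition hom_of :: "(gen \<Rightarrow> FA) \<Rightarrow> FA \<Rightarrow> FA" where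
  "hom_of \<sigma> p = (\<Sum>w\<in>Poly_Mapping.keys p. sc (Poly_Mapping.lookup p w) \<odot> word_eval \<sigma> w)"

(* The algebra homomorphism hom_of sigma : Free/ideal_of R1 -> Free/ideal_of R2
   is well defined, injective and surjective. *)
definition induces_iso :: "(gen \<Rightarrow> FA) \<Rightarrow> FA set \<Rightarrow> FA set \<Rightarrow> bool" where
  "induces_iso \<sigma> R1 R2 \<longleftrightarrow>
     (\<forall>p. p \<in> ideal_of R1 \<longrightarrow> hom_of \<sigma> p \<in> ideal_of R2) \<and>
     (\<forall>p. hom_of \<sigma> p \<in> ideal_of R2 \<longrightarrow> p \<in> ideal_of R1) \<and>
     (\<forall>q. \<exists>p. q - hom_of \<sigma> p \<in> ideal_of R2)"

(* weights nu in Lambda = Z^n are given by j \<mapsto> epsilon_j^vee(nu), j = 1..n *)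
definition dd :: "(nat \<Rightarrow> int) \<Rightarrow> (nat \<Rightarrow> int) \<Rightarrow> bool \<Rightarrow> nat \<Rightarrow> int" where
  "dd dp dm b i = (if b then dp i else dm i)"

definition valid_gen :: "nat \<Rightarrow> (nat \<Rightarrow> int) \<Rightarrow> (nat \<Rightarrow> int) \<Rightarrow> gen \<Rightarrow> bool" where
  "valid_gen n dp dm g = (case g of
      GE i r \<Rightarrow> 1 \<le> i \<and> i < n
    | GF i r \<Rightarrow> 1 \<le> i \<and> i < n
    | GPhi b i s \<Rightarrow> 1 \<le> i \<and> i \<le> n \<and> dd dp dm b i \<le> s
    | GPhiInv b i \<Rightarrow> 1 \<le> i \<and> i \<le> n)"

(* coefficient of t^k in phi^b_i, where t = z^{-1} for b = True, t = z for b = False *)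
definition cf :: "(nat \<Rightarrow> int) \<Rightarrow> (nat \<Rightarrow> int) \<Rightarrow> bool \<Rightarrow> nat \<Rightarrow> int \<Rightarrow> FA" where
  "cf dp dm b i k = (if dd dp dm b i \<le> k then gen (GPhi b i k) else 0)"

(* coefficient of z^{-k} in phi^b_i(z) *)
definition phiz :: "(nat \<Rightarrow> int) \<Rightarrow> (nat \<Rightarrow> int) \<Rightarrow> bool \<Rightarrow> nat \<Rightarrow> int \<Rightarrow> FA" where
  "phiz dp dm b i k = (if b then cf dp dm True i k else cf dp dm False i (- k))"

(* coefficients p_0..p_m of the inverse series psi = sum_m p_m t^{-d+m} of
   phi = sum_{l>=0} c(d+l) t^{d+l}, with p_0 = ainv = c(d)^{-1} and
   p_M = - ainv * sum_{l=1}^M c(d+l) p_{M-l} *)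
primrec psi_list :: "(int \<Rightarrow> FA) \<Rightarrow> int \<Rightarrow> FA \<Rightarrow> nat \<Rightarrow> FA list" where
  "psi_list c d ainv 0 = [ainv]"
| "psi_list c d ainv (Suc m) =
     (let ps = psi_list c d ainv m
      in ps @ [- (ainv \<odot> (\<Sum>l\<in>{1..Suc m}. c (d + int l) \<odot> (ps ! (Suc m - l))))])"

definition psi :: "(int \<Rightarrow> FA) \<Rightarrow> int \<Rightarrow> FA \<Rightarrow> nat \<Rightarrow> FA" where
  "psi c d ainv m = psi_list c d ainv m ! m"

(* coefficient of t^k in phi^b_i(z)^{-1} phi^b_{i+1}(z) *)
definition GG :: "(nat \<Rightarrow> int) \<Rightarrow> (nat \<Rightarrow> int) \<Rightarrow> bool \<Rightarrow> nat \<Rightarrow> int \<Rightarrow> FA" where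
  "GG dp dm b i k =
     (let N = k + dd dp dm b i - dd dp dm b (i + 1) in
      if N < 0 then 0 else
      (\<Sum>m\<in>{0..nat N}.
          psi (cf dp dm b i) (dd dp dm b i) (gen (GPhiInv b i)) m
          \<odot> cf dp dm b (i + 1) (dd dp dm b (i + 1) + int (nat N - m))))"

(* coefficient of z^{-k} in phi^+_i(z)^{-1}phi^+_{i+1}(z) - phi^-_i(z)^{-1}phi^-_{i+1}(z) *)
definition Hc :: "(nat \<Rightarrow> int) \<Rightarrow> (nat \<Rightarrow> int) \<Rightarrow> nat \<Rightarrow> int \<Rightarrow> FA" where
  "Hc dp dm i k = GG dp dm True i k - GG dp dm False i (- k)"

(* coefficient of z^{-k} w^{-l} in (a z + b w) X(z) Y(w) - (c z + d w) Y(w) X(z) *)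
definition brel :: "K \<Rightarrow> K \<Rightarrow> K \<Rightarrow> K \<Rightarrow> (int \<Rightarrow> FA) \<Rightarrow> (int \<Rightarrow> FA) \<Rightarrow> int \<Rightarrow> int \<Rightarrow> FA" where
  "brel a b c d X Y k l =
     sc a \<odot> X (k + 1) \<odot> Y l + sc b \<odot> X k \<odot> Y (l + 1)
     - sc c \<odot> Y l \<odot> X (k + 1) - sc d \<odot> Y (l + 1) \<odot> X k"

definition qcomm :: "FA \<Rightarrow> FA \<Rightarrow> K \<Rightarrow> FA" where
  "qcomm x y q = x \<odot> y - sc q \<odot> y \<odot> x"

definition serre :: "FA \<Rightarrow> FA \<Rightarrow> FA \<Rightarrow> FA" where
  "serre a b c = qcomm a (qcomm b c qv) (inverse qv)"

definition EE :: "nat \<Rightarrow> int \<Rightarrow> FA" where "EE i r = gen (GE i r)"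
definition FF :: "nat \<Rightarrow> int \<Rightarrow> FA" where "FF i r = gen (GF i r)"

(* coefficients (a,b,c,d) for (U2): (a z + b w) phi_i(z) E_j(w) = (c z + d w) E_j(w) phi_i(z) *)
definition cU2 :: "nat \<Rightarrow> nat \<Rightarrow> K \<times> K \<times> K \<times> K" where
  "cU2 i j = (if i = j + 1 then (inverse qv, - qv, 1, -1)
              else if i = j then (qv, - inverse qv, 1, -1) else (1, 0, 1, 0))"
definition cU3 :: "nat \<Rightarrow> nat \<Rightarrow> K \<times> K \<times> K \<times> K" where
  "cU3 i j = (if i = j + 1 then (1, -1, inverse qv, - qv)
              else if i = j then (1, -1, qv, - inverse qv) else (1, 0, 1, 0))"
definition cU4 :: "nat \<Rightarrow> nat \<Rightarrow> K \<times> K \<times> K \<times> K" where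
  "cU4 i j = (if i = j then (inverse qv, - qv, qv, - inverse qv)
              else if j = i + 1 then (qv, - inverse qv, 1, -1)
              else if i = j + 1 then (1, -1, inverse qv, - qv) else (1, 0, 1, 0))"
definition cU5 :: "nat \<Rightarrow> nat \<Rightarrow> K \<times> K \<times> K \<times> K" where
  "cU5 i j = (if i = j then (qv, - inverse qv, inverse qv, - qv)
              else if j = i + 1 then (1, -1, qv, - inverse qv)
              else if i = j + 1 then (inverse qv, - qv, 1, -1) else (1, 0, 1, 0))"

definition brel4 :: "K \<times> K \<times> K \<times> K \<Rightarrow> (int \<Rightarrow> FA) \<Rightarrow> (int \<Rightarrow> FA) \<Rightarrow> int \<Rightarrow> int \<Rightarrow> FA" where
  "brel4 q X Y k l = (case q of (a, b, c, d) \<Rightarrow> brel a b c d X Y k l)"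

definition rels :: "nat \<Rightarrow> (nat \<Rightarrow> int) \<Rightarrow> (nat \<Rightarrow> int) \<Rightarrow> FA set" where
  "rels n dp dm =
     {gen g | g. \<not> valid_gen n dp dm g}
   \<union> {gen (GPhi b i k) \<odot> gen (GPhi b' j l) - gen (GPhi b' j l) \<odot> gen (GPhi b i k)
       | b b' i j k l. 1 \<le> i \<and> i \<le> n \<and> 1 \<le> j \<and> j \<le> n}
   \<union> {gen (GPhi b i (dd dp dm b i)) \<odot> gen (GPhiInv b i) - fone | b i. 1 \<le> i \<and> i \<le> n}
   \<union> {gen (GPhiInv b i) \<odot> gen (GPhi b i (dd dp dm b i)) - fone | b i. 1 \<le> i \<and> i \<le> n}
   \<union> {EE i r \<odot> FF j s - FF j s \<odot> EE i r
        - (if i = j then sc (qv - inverse qv) \<odot> Hc dp dm i (r + s) else 0)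
       | i j r s. 1 \<le> i \<and> i < n \<and> 1 \<le> j \<and> j < n}
   \<union> {brel4 (cU2 i j) (phiz dp dm b i) (EE j) k l
       | b i j k l. 1 \<le> i \<and> i \<le> n \<and> 1 \<le> j \<and> j < n}
   \<union> {brel4 (cU3 i j) (phiz dp dm b i) (FF j) k l
       | b i j k l. 1 \<le> i \<and> i \<le> n \<and> 1 \<le> j \<and> j < n}
   \<union> {brel4 (cU4 i j) (EE i) (EE j) k l
       | i j k l. 1 \<le> i \<and> i < n \<and> 1 \<le> j \<and> j < n}
   \<union> {brel4 (cU5 i j) (FF i) (FF j) k l
       | i j k l. 1 \<le> i \<and> i < n \<and> 1 \<le> j \<and> j < n}
   \<union> {serre (EE i r1) (EE i r2) (EE j s) + serre (EE i r2) (EE i r1) (EE j s)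
       | i j r1 r2 s. 1 \<le> i \<and> i < n \<and> 1 \<le> j \<and> j < n \<and> (i = j + 1 \<or> j = i + 1)}
   \<union> {serre (FF i r1) (FF i r2) (FF j s) + serre (FF i r2) (FF i r1) (FF j s)
       | i j r1 r2 s. 1 \<le> i \<and> i < n \<and> 1 \<le> j \<and> j < n \<and> (i = j + 1 \<or> j = i + 1)}"

definition alpha_cw :: "nat \<Rightarrow> (nat \<Rightarrow> int) \<Rightarrow> int" where
  "alpha_cw i \<mu> = \<mu> i - \<mu> (i + 1)"

fun shift_gen :: "(nat \<Rightarrow> int) \<Rightarrow> (nat \<Rightarrow> int) \<Rightarrow> (nat \<Rightarrow> int) \<Rightarrow> (nat \<Rightarrow> int) \<Rightarrow> gen \<Rightarrow> gen" where
  "shift_gen mp1 mm1 mp2 mm2 (GPhi True i s) = GPhi True i (s - (mp1 i - mp2 i))"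
| "shift_gen mp1 mm1 mp2 mm2 (GPhi False i s) = GPhi False i (s - (mm1 i - mm2 i))"
| "shift_gen mp1 mm1 mp2 mm2 g = g"

end

theory Submission
  imports Defs
begin

lemma fmul_single_single: "Poly_Mapping.single a x \<odot> Poly_Mapping.single b y = Poly_Mapping.single (a @ b) (x * y)"
  by (cases "x = 0"; cases "y = 0") (simp_all add: fmul_def)

lemma lookup_fmul_raw: "Poly_Mapping.lookup (p \<odot> q) w =
   (\<Sum>a\<in>Poly_Mapping.keys p. \<Sum>b\<in>Poly_Mapping.keys q. if a @ b = w then Poly_Mapping.lookup p a * Poly_Mapping.lookup q b else 0)"
  by (simp add: fmul_def lookup_sum lookup_single when_def)

lemma lookup_fmul: "Poly_Mapping.lookup (p \<odot> q) w =
   (\<Sum>i\<le>length w. Poly_Mapping.lookup p (take i w) * Poly_Mapping.lookup q (drop i w))"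
proof -
  have inner: "(\<Sum>b\<in>Poly_Mapping.keys q. if a @ b = w then Poly_Mapping.lookup p a * Poly_Mapping.lookup q b else 0)
      = (if take (length a) w = a then Poly_Mapping.lookup p a * Poly_Mapping.lookup q (drop (length a) w) else 0)" for a
  proof -
    have "(\<Sum>b\<in>Poly_Mapping.keys q. if a @ b = w then Poly_Mapping.lookup p a * Poly_Mapping.lookup q b else 0)
       = (\<Sum>b\<in>Poly_Mapping.keys q. if b = drop (length a) w then (if take (length a) w = a then Poly_Mapping.lookup p a * Poly_Mapping.lookup q b else 0) else 0)"
      by (rule sum.cong) (auto simp: append_eq_conv_conj)
    also have "\<dots> = (if take (length a) w = a then Poly_Mapping.lookup p a * Poly_Mapping.lookup q (drop (length a) w) else 0)"
      by (simp add: sum.delta in_keys_iff)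
    finally show ?thesis .
  qed
  have "Poly_Mapping.lookup (p \<odot> q) w = (\<Sum>a\<in>Poly_Mapping.keys p. if take (length a) w = a then Poly_Mapping.lookup p a * Poly_Mapping.lookup q (drop (length a) w) else 0)"
    by (simp add: lookup_fmul_raw inner)
  also have "\<dots> = (\<Sum>a\<in>(\<lambda>i. take i w) ` {..length w}. if take (length a) w = a then Poly_Mapping.lookup p a * Poly_Mapping.lookup q (drop (length a) w) else 0)"
  proof (rule sum.mono_neutral_cong)
    show "finite (Poly_Mapping.keys p)" by simp
    show "finite ((\<lambda>i. take i w) ` {..length w})" by simp
  next
    fix a assume "a \<in> Poly_Mapping.keys p - (\<lambda>i. take i w) ` {..length w}"
    then show "(if take (length a) w = a then Poly_Mapping.lookup p a * Poly_Mapping.lookup q (drop (length a) w) else 0) = 0"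
    proof (cases "take (length a) w = a")
      case True
      then have "length a \<le> length w" by (metis length_take min.bounded_iff order_refl)
      with True have "a \<in> (\<lambda>i. take i w) ` {..length w}" by (metis atMost_iff image_eqI)
      with \<open>a \<in> _ - _\<close> show ?thesis by blast
    qed simp
  next
    fix a assume "a \<in> (\<lambda>i. take i w) ` {..length w} - Poly_Mapping.keys p"
    then show "(if take (length a) w = a then Poly_Mapping.lookup p a * Poly_Mapping.lookup q (drop (length a) w) else 0) = 0"
      by (simp add: in_keys_iff)
  qed auto
  also have "\<dots> = (\<Sum>i\<le>length w. Poly_Mapping.lookup p (take i w) * Poly_Mapping.lookup q (drop i w))"
  proof (subst sum.reindex)
    show "inj_on (\<lambda>i. take i w) {..length w}"
    proof (rule inj_onI)
      fix x y assume "x \<in> {..length w}" "y \<in> {..length w}" "take x w = take y w"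
      then show "x = y" by (metis atMost_iff length_take min.absorb2)
    qed
  qed (rule sum.cong, auto simp: min.absorb2)
  finally show ?thesis .
qed

locale rn =
  fixes f g :: "gen \<Rightarrow> gen"
  assumes fg [simp]: "f (g x) = x" and gf [simp]: "g (f x) = x"
begin

definition H :: "FA \<Rightarrow> FA" where "H p = hom_of (\<lambda>x. gen (f x)) p"

lemma word_eval_ren: "word_eval (\<lambda>x. gen (f x)) w = Poly_Mapping.single (map f w) 1"
  by (induction w) (simp_all add: fone_def gen_def fmul_single_single)

lemma map_f_eq: "map f v = w \<longleftrightarrow> v = map g w"
  by (auto simp: comp_def)

lemma lookup_H: "Poly_Mapping.lookup (H p) w = Poly_Mapping.lookup p (map g w)"
proof -
  have "Poly_Mapping.lookup (H p) w = (\<Sum>v\<in>Poly_Mapping.keys p. if v = map g w then Poly_Mapping.lookup p v else 0)"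
    by (simp add: H_def hom_of_def word_eval_ren sc_def fmul_single_single lookup_sum lookup_single when_def map_f_eq)
  also have "\<dots> = Poly_Mapping.lookup p (map g w)" by (simp add: sum.delta in_keys_iff)
  finally show ?thesis .
qed

lemma H_add: "H (p + q) = H p + H q"
  by (rule poly_mapping_eqI) (simp add: lookup_H lookup_add)
lemma H_minus: "H (p - q) = H p - H q"
  by (rule poly_mapping_eqI) (simp add: lookup_H lookup_minus)
lemma H_uminus: "H (- p) = - H p"
  by (rule poly_mapping_eqI) (simp add: lookup_H)
lemma H_zero: "H 0 = 0"
  by (rule poly_mapping_eqI) (simp add: lookup_H)
lemma H_sum: "H (sum P A) = (\<Sum>x\<in>A. H (P x))"
  by (rule poly_mapping_eqI) (simp add: lookup_H lookup_sum)
lemma H_mul: "H (p \<odot> q) = H p \<odot> H q"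
  by (rule poly_mapping_eqI) (simp add: lookup_H lookup_fmul take_map drop_map)
lemma H_sc: "H (sc c) = sc c"
  by (rule poly_mapping_eqI) (simp add: lookup_H sc_def lookup_single when_def)
lemma H_fone: "H fone = fone"
  by (rule poly_mapping_eqI) (simp add: lookup_H fone_def lookup_single when_def)
lemma H_gen: "H (gen x) = gen (f x)"
  by (rule poly_mapping_eqI) (auto simp: lookup_H gen_def lookup_single when_def)


lemma H_if: "H (if c then p else q) = (if c then H p else H q)" by simp

lemma length_psi_list: "length (psi_list c d a m) = Suc m"
  by (induction m) (simp_all add: Let_def)

lemma H_psi_list:
  assumes "\<And>l. H (c (d + int l)) = c' (d' + int l)"
  shows "map H (psi_list c d a m) = psi_list c' d' (H a) m"
proof (induction m)
  case 0 then show ?case by simp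
next
  case (Suc m)
  have eq: "H (psi_list c d a m ! (Suc m - l)) = psi_list c' d' (H a) m ! (Suc m - l)"
    if "l \<in> {1..Suc m}" for l
  proof -
    have "Suc m - l < length (psi_list c d a m)" using that by (simp add: length_psi_list)
    then have "H (psi_list c d a m ! (Suc m - l)) = map H (psi_list c d a m) ! (Suc m - l)" by simp
    then show ?thesis using Suc by simp
  qed
  have S: "H (\<Sum>l\<in>{1..Suc m}. c (d + int l) \<odot> psi_list c d a m ! (Suc m - l))
     = (\<Sum>l\<in>{1..Suc m}. c' (d' + int l) \<odot> psi_list c' d' (H a) m ! (Suc m - l))"
    by (simp only: H_sum H_mul) (rule sum.cong, simp_all add: assms eq)
  show ?case using Suc
    by (simp only: psi_list.simps Let_def map_append list.map H_uminus H_mul S)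
qed

lemma H_psi:
  assumes "\<And>l. H (c (d + int l)) = c' (d' + int l)"
  shows "H (psi c d a m) = psi c' d' (H a) m"
proof -
  have "H (psi c d a m) = map H (psi_list c d a m) ! m"
    by (simp add: psi_def length_psi_list)
  also have "\<dots> = psi_list c' d' (H a) m ! m" by (simp only: H_psi_list[where c=c and d=d and c'=c' and d'=d', OF assms])
  finally show ?thesis by (simp add: psi_def)
qed

lemma H_brel: "H (brel a b c d X Y k l) = brel a b c d (\<lambda>m. H (X m)) (\<lambda>m. H (Y m)) k l"
  by (simp add: brel_def H_add H_minus H_mul H_sc)

lemma H_brel4: "H (brel4 q X Y k l) = brel4 q (\<lambda>m. H (X m)) (\<lambda>m. H (Y m)) k l"
  by (cases q) (simp add: brel4_def H_brel)

lemma H_qcomm: "H (qcomm x y q) = qcomm (H x) (H y) q"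
  by (simp add: qcomm_def H_minus H_mul H_sc)

lemma H_serre: "H (serre a b c) = serre (H a) (H b) (H c)"
  by (simp add: serre_def H_qcomm)

lemma H_ideal:
  assumes "H ` R1 \<subseteq> R2" and "p \<in> ideal_of R1"
  shows "H p \<in> ideal_of R2"
  using assms(2)
proof induction
  case zero then show ?case by (simp add: H_zero ideal_of.zero)
next
  case (gen_rel r a b)
  then have "H r \<in> R2" using assms(1) by blast
  then show ?case by (simp add: H_mul ideal_of.gen_rel)
next
  case (add x y) then show ?case by (simp add: H_add ideal_of.add)
qed

end

lemma H_inv:
  assumes "\<And>x. f (g x) = x" "\<And>x. g (f x) = x"
  shows "rn.H g (rn.H f p) = p"
proof -
  interpret a: rn f g using assms by unfold_locales
  interpret b: rn g f using assms by unfold_locales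
  show ?thesis by (rule poly_mapping_eqI) (simp add: a.lookup_H b.lookup_H comp_def)
qed

lemma brel_shift: "brel a b c d (\<lambda>m. X (m + e)) Y k l = brel a b c d X Y (k + e) l"
  by (simp add: brel_def ac_simps)

lemma brel4_shift: "brel4 q (\<lambda>m. X (m + e)) Y k l = brel4 q X Y (k + e) l"
  by (cases q) (simp add: brel4_def brel_shift)

locale sh =
  fixes n :: nat and mp1 mm1 mp2 mm2 :: "nat \<Rightarrow> int"
  assumes ap: "\<forall>i. 1 \<le> i \<and> i \<le> n - 1 \<longrightarrow> alpha_cw i mp1 = alpha_cw i mp2"
    and am: "\<forall>i. 1 \<le> i \<and> i \<le> n - 1 \<longrightarrow> alpha_cw i mm1 = alpha_cw i mm2"
begin

sublocale rn "shift_gen mp1 mm1 mp2 mm2" "shift_gen mp2 mm2 mp1 mm1"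
proof
  fix x show "shift_gen mp1 mm1 mp2 mm2 (shift_gen mp2 mm2 mp1 mm1 x) = x"
    by (cases x; cases "case x of GPhi b i s \<Rightarrow> b | _ \<Rightarrow> True") auto
  show "shift_gen mp2 mm2 mp1 mm1 (shift_gen mp1 mm1 mp2 mm2 x) = x"
    by (cases x; cases "case x of GPhi b i s \<Rightarrow> b | _ \<Rightarrow> True") auto
qed

abbreviation "D b i \<equiv> dd mp1 mm1 b i - dd mp2 mm2 b i"

lemma f_phi: "shift_gen mp1 mm1 mp2 mm2 (GPhi b i s) = GPhi b i (s - D b i)"
  by (cases b) (simp_all add: dd_def)

lemma H_cf: "H (cf mp1 mm1 b i k) = cf mp2 mm2 b i (k - D b i)"
  by (simp add: cf_def H_gen H_zero f_phi)

lemma H_phiz: "H (phiz mp1 mm1 b i k) = phiz mp2 mm2 b i (k + (if b then - D b i else D b i))"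
  by (cases b) (simp_all add: phiz_def H_cf algebra_simps)

lemma H_EE: "H (EE i r) = EE i r" by (simp add: EE_def H_gen)
lemma H_FF: "H (FF i r) = FF i r" by (simp add: FF_def H_gen)

lemma Ddiff: assumes "1 \<le> i" "i < n"
  shows "dd mp1 mm1 b i - dd mp1 mm1 b (i + 1) = dd mp2 mm2 b i - dd mp2 mm2 b (i + 1)"
  using ap am assms by (cases b) (auto simp: dd_def alpha_cw_def)

lemma H_GG: assumes "1 \<le> i" "i < n"
  shows "H (GG mp1 mm1 b i k) = GG mp2 mm2 b i k"
proof -
  have N: "k + dd mp1 mm1 b i - dd mp1 mm1 b (i + 1) = k + dd mp2 mm2 b i - dd mp2 mm2 b (i + 1)"
    using Ddiff[OF assms, of b] by simp
  have c1: "H (cf mp1 mm1 b i (dd mp1 mm1 b i + int l)) = cf mp2 mm2 b i (dd mp2 mm2 b i + int l)" for l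
    by (simp add: H_cf algebra_simps)
  have c2: "H (cf mp1 mm1 b (Suc i) (dd mp1 mm1 b (Suc i) + j)) = cf mp2 mm2 b (Suc i) (dd mp2 mm2 b (Suc i) + j)" for j
    by (simp add: H_cf algebra_simps)
  show ?thesis
    unfolding GG_def Let_def N
    by (simp add: H_zero H_sum H_mul H_psi[where c="cf mp1 mm1 b i" and d="dd mp1 mm1 b i" and c'="cf mp2 mm2 b i" and d'="dd mp2 mm2 b i", OF c1] c2 H_gen)
qed

lemma H_Hc: assumes "1 \<le> i" "i < n"
  shows "H (Hc mp1 mm1 i k) = Hc mp2 mm2 i k"
  by (simp add: Hc_def H_minus H_GG[OF assms])

lemma valid_shift: "\<not> valid_gen n mp1 mm1 x \<Longrightarrow> \<not> valid_gen n mp2 mm2 (shift_gen mp1 mm1 mp2 mm2 x)"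
  by (cases x; cases "case x of GPhi b i s \<Rightarrow> b | _ \<Rightarrow> True") (auto simp: valid_gen_def dd_def)

lemma H_rels: "H ` rels n mp1 mm1 \<subseteq> rels n mp2 mm2"
proof
  fix y assume "y \<in> H ` rels n mp1 mm1"
  then obtain x where x: "x \<in> rels n mp1 mm1" and y: "y = H x" by blast
  let ?f = "shift_gen mp1 mm1 mp2 mm2"
  from x[unfolded rels_def] show "y \<in> rels n mp2 mm2"
  proof (elim UnE)
    assume "x \<in> {gen g | g. \<not> valid_gen n mp1 mm1 g}"
    then obtain g where "x = gen g" "\<not> valid_gen n mp1 mm1 g" by blast
    then have "y \<in> {gen g | g. \<not> valid_gen n mp2 mm2 g}"
      using valid_shift by (auto simp: y H_gen)
    then show ?thesis unfolding rels_def by blast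
  next
    assume "x \<in> {gen (GPhi b i k) \<odot> gen (GPhi b' j l) - gen (GPhi b' j l) \<odot> gen (GPhi b i k)
       | b b' i j k l. 1 \<le> i \<and> i \<le> n \<and> 1 \<le> j \<and> j \<le> n}"
    then obtain b b' i j k l where "x = gen (GPhi b i k) \<odot> gen (GPhi b' j l) - gen (GPhi b' j l) \<odot> gen (GPhi b i k)"
       "1 \<le> i \<and> i \<le> n \<and> 1 \<le> j \<and> j \<le> n" by blast
    then have "y \<in> {gen (GPhi b i k) \<odot> gen (GPhi b' j l) - gen (GPhi b' j l) \<odot> gen (GPhi b i k)
       | b b' i j k l. 1 \<le> i \<and> i \<le> n \<and> 1 \<le> j \<and> j \<le> n}"
      by (simp only: y H_minus H_mul H_gen f_phi) blast
    then show ?thesis unfolding rels_def by blast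
  next
    assume "x \<in> {gen (GPhi b i (dd mp1 mm1 b i)) \<odot> gen (GPhiInv b i) - fone | b i. 1 \<le> i \<and> i \<le> n}"
    then obtain b i where "x = gen (GPhi b i (dd mp1 mm1 b i)) \<odot> gen (GPhiInv b i) - fone" "1 \<le> i \<and> i \<le> n" by blast
    then have "y \<in> {gen (GPhi b i (dd mp2 mm2 b i)) \<odot> gen (GPhiInv b i) - fone | b i. 1 \<le> i \<and> i \<le> n}"
      by (simp add: y H_minus H_mul H_gen f_phi H_fone) blast
    then show ?thesis unfolding rels_def by blast
  next
    assume "x \<in> {gen (GPhiInv b i) \<odot> gen (GPhi b i (dd mp1 mm1 b i)) - fone | b i. 1 \<le> i \<and> i \<le> n}"
    then obtain b i where "x = gen (GPhiInv b i) \<odot> gen (GPhi b i (dd mp1 mm1 b i)) - fone" "1 \<le> i \<and> i \<le> n" by blast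
    then have "y \<in> {gen (GPhiInv b i) \<odot> gen (GPhi b i (dd mp2 mm2 b i)) - fone | b i. 1 \<le> i \<and> i \<le> n}"
      by (simp add: y H_minus H_mul H_gen f_phi H_fone) blast
    then show ?thesis unfolding rels_def by blast
  next
    assume "x \<in> {EE i r \<odot> FF j s - FF j s \<odot> EE i r
        - (if i = j then sc (qv - inverse qv) \<odot> Hc mp1 mm1 i (r + s) else 0)
       | i j r s. 1 \<le> i \<and> i < n \<and> 1 \<le> j \<and> j < n}"
    then obtain i j r s where xe: "x = EE i r \<odot> FF j s - FF j s \<odot> EE i r
        - (if i = j then sc (qv - inverse qv) \<odot> Hc mp1 mm1 i (r + s) else 0)" and c: "1 \<le> i \<and> i < n \<and> 1 \<le> j \<and> j < n" by blast
    have "y = EE i r \<odot> FF j s - FF j s \<odot> EE i r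
        - (if i = j then sc (qv - inverse qv) \<odot> Hc mp2 mm2 i (r + s) else 0)"
      using c by (simp add: y xe H_minus H_mul H_EE H_FF H_if H_sc H_Hc H_zero)
    with c have "y \<in> {EE i r \<odot> FF j s - FF j s \<odot> EE i r
        - (if i = j then sc (qv - inverse qv) \<odot> Hc mp2 mm2 i (r + s) else 0)
       | i j r s. 1 \<le> i \<and> i < n \<and> 1 \<le> j \<and> j < n}" by blast
    then show ?thesis unfolding rels_def by blast
  next
    assume "x \<in> {brel4 (cU2 i j) (phiz mp1 mm1 b i) (EE j) k l
       | b i j k l. 1 \<le> i \<and> i \<le> n \<and> 1 \<le> j \<and> j < n}"
    then obtain b i j k l where xe: "x = brel4 (cU2 i j) (phiz mp1 mm1 b i) (EE j) k l" and c: "1 \<le> i \<and> i \<le> n \<and> 1 \<le> j \<and> j < n" by blast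
    have "y = brel4 (cU2 i j) (phiz mp2 mm2 b i) (EE j) (k + (if b then - D b i else D b i)) l"
      by (simp only: y xe H_brel4 H_phiz H_EE brel4_shift)
    with c have "y \<in> {brel4 (cU2 i j) (phiz mp2 mm2 b i) (EE j) k l
       | b i j k l. 1 \<le> i \<and> i \<le> n \<and> 1 \<le> j \<and> j < n}" by blast
    then show ?thesis unfolding rels_def by blast
  next
    assume "x \<in> {brel4 (cU3 i j) (phiz mp1 mm1 b i) (FF j) k l
       | b i j k l. 1 \<le> i \<and> i \<le> n \<and> 1 \<le> j \<and> j < n}"
    then obtain b i j k l where xe: "x = brel4 (cU3 i j) (phiz mp1 mm1 b i) (FF j) k l" and c: "1 \<le> i \<and> i \<le> n \<and> 1 \<le> j \<and> j < n" by blast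
    have "y = brel4 (cU3 i j) (phiz mp2 mm2 b i) (FF j) (k + (if b then - D b i else D b i)) l"
      by (simp only: y xe H_brel4 H_phiz H_FF brel4_shift)
    with c have "y \<in> {brel4 (cU3 i j) (phiz mp2 mm2 b i) (FF j) k l
       | b i j k l. 1 \<le> i \<and> i \<le> n \<and> 1 \<le> j \<and> j < n}" by blast
    then show ?thesis unfolding rels_def by blast
  next
    assume "x \<in> {brel4 (cU4 i j) (EE i) (EE j) k l
       | i j k l. 1 \<le> i \<and> i < n \<and> 1 \<le> j \<and> j < n}"
    then obtain i j k l where xe: "x = brel4 (cU4 i j) (EE i) (EE j) k l" and c: "1 \<le> i \<and> i < n \<and> 1 \<le> j \<and> j < n" by blast
    have "y = brel4 (cU4 i j) (EE i) (EE j) k l"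
      by (simp only: y xe H_brel4 H_EE)
    with c have "y \<in> {brel4 (cU4 i j) (EE i) (EE j) k l
       | i j k l. 1 \<le> i \<and> i < n \<and> 1 \<le> j \<and> j < n}" by blast
    then show ?thesis unfolding rels_def by blast
  next
    assume "x \<in> {brel4 (cU5 i j) (FF i) (FF j) k l
       | i j k l. 1 \<le> i \<and> i < n \<and> 1 \<le> j \<and> j < n}"
    then obtain i j k l where xe: "x = brel4 (cU5 i j) (FF i) (FF j) k l" and c: "1 \<le> i \<and> i < n \<and> 1 \<le> j \<and> j < n" by blast
    have "y = brel4 (cU5 i j) (FF i) (FF j) k l"
      by (simp only: y xe H_brel4 H_FF)
    with c have "y \<in> {brel4 (cU5 i j) (FF i) (FF j) k l
       | i j k l. 1 \<le> i \<and> i < n \<and> 1 \<le> j \<and> j < n}" by blast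
    then show ?thesis unfolding rels_def by blast
  next
    assume "x \<in> {serre (EE i r1) (EE i r2) (EE j s) + serre (EE i r2) (EE i r1) (EE j s)
       | i j r1 r2 s. 1 \<le> i \<and> i < n \<and> 1 \<le> j \<and> j < n \<and> (i = j + 1 \<or> j = i + 1)}"
    then obtain i j r1 r2 s where xe: "x = serre (EE i r1) (EE i r2) (EE j s) + serre (EE i r2) (EE i r1) (EE j s)"
      and c: "1 \<le> i \<and> i < n \<and> 1 \<le> j \<and> j < n \<and> (i = j + 1 \<or> j = i + 1)" by blast
    have "y = serre (EE i r1) (EE i r2) (EE j s) + serre (EE i r2) (EE i r1) (EE j s)"
      by (simp only: y xe H_add H_serre H_EE)
    with c have "y \<in> {serre (EE i r1) (EE i r2) (EE j s) + serre (EE i r2) (EE i r1) (EE j s)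
       | i j r1 r2 s. 1 \<le> i \<and> i < n \<and> 1 \<le> j \<and> j < n \<and> (i = j + 1 \<or> j = i + 1)}" by blast
    then show ?thesis unfolding rels_def by blast
  next
    assume "x \<in> {serre (FF i r1) (FF i r2) (FF j s) + serre (FF i r2) (FF i r1) (FF j s)
       | i j r1 r2 s. 1 \<le> i \<and> i < n \<and> 1 \<le> j \<and> j < n \<and> (i = j + 1 \<or> j = i + 1)}"
    then obtain i j r1 r2 s where xe: "x = serre (FF i r1) (FF i r2) (FF j s) + serre (FF i r2) (FF i r1) (FF j s)"
      and c: "1 \<le> i \<and> i < n \<and> 1 \<le> j \<and> j < n \<and> (i = j + 1 \<or> j = i + 1)" by blast
    have "y = serre (FF i r1) (FF i r2) (FF j s) + serre (FF i r2) (FF i r1) (FF j s)"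
      by (simp only: y xe H_add H_serre H_FF)
    with c have "y \<in> {serre (FF i r1) (FF i r2) (FF j s) + serre (FF i r2) (FF i r1) (FF j s)
       | i j r1 r2 s. 1 \<le> i \<and> i < n \<and> 1 \<le> j \<and> j < n \<and> (i = j + 1 \<or> j = i + 1)}" by blast
    then show ?thesis unfolding rels_def by blast
  qed
qed

end

theorem lemma3p2:
  fixes n :: nat and mp1 mm1 mp2 mm2 :: "nat \<Rightarrow> int"
  assumes "n \<ge> 2"
    and "\<forall>i. 1 \<le> i \<and> i \<le> n - 1 \<longrightarrow> alpha_cw i mp1 = alpha_cw i mp2"
    and "\<forall>i. 1 \<le> i \<and> i \<le> n - 1 \<longrightarrow> alpha_cw i mm1 = alpha_cw i mm2"
  shows "induces_iso (\<lambda>g. gen (shift_gen mp1 mm1 mp2 mm2 g))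
           (rels n mp1 mm1) (rels n mp2 mm2)"
proof -
  interpret s1: sh n mp1 mm1 mp2 mm2 using assms(2,3) by unfold_locales
  interpret s2: sh n mp2 mm2 mp1 mm1 using assms(2,3) by unfold_locales auto
  have i1: "s2.H (s1.H p) = p" for p
    by (rule H_inv) simp_all
  have i2: "s1.H (s2.H p) = p" for p
    by (rule H_inv) simp_all
  have h: "hom_of (\<lambda>g. gen (shift_gen mp1 mm1 mp2 mm2 g)) p = s1.H p" for p
    by (simp add: s1.H_def)
  show ?thesis
    unfolding induces_iso_def h
  proof (intro conjI allI impI)
    fix p assume "p \<in> ideal_of (rels n mp1 mm1)"
    then show "s1.H p \<in> ideal_of (rels n mp2 mm2)" by (rule s1.H_ideal[OF s1.H_rels])
  next
    fix p assume "s1.H p \<in> ideal_of (rels n mp2 mm2)"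
    then have "s2.H (s1.H p) \<in> ideal_of (rels n mp1 mm1)" by (rule s2.H_ideal[OF s2.H_rels])
    then show "p \<in> ideal_of (rels n mp1 mm1)" by (simp add: i1)
  next
    fix q show "\<exists>p. q - s1.H p \<in> ideal_of (rels n mp2 mm2)"
      by (rule exI[of _ "s2.H q"]) (simp add: i2 ideal_of.zero)
  qed
qed

end
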